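(* In the Shepp--Olkin setting with $p_i'\ge0$ for all $i$ and $v=\sum_ip_i'>0$, for every $t$ and every $k\in\{0,\ldots,n-1\}$ with $f_k(t)>0$ and $f_{k+1}(t)>0$, the coefficients $$\alpha_k(t)=\frac{\sum_{i=1}^np_i'p_i(t)f_{k-1}^{(i)}(t)}{vf_k(t)}$$ satisfy $\alpha_k(t)\le\alpha_{k+1}(t)$.
   Context: Shepp--Olkin setting: $p_1,\ldots,p_n:[0,1]\to[0,1]$ are affine functions with constant derivatives $p_i'$. $f_k(t)$, $k=0,\ldots,n$, is the probability mass function of a sum of independent Bernoulli variables with parameters $p_1(t),\ldots,p_n(t)$; $f^{(i)}_k(t)$ is the mass function of the sum omitting the $i$-th variable (extended by $0$ outside $\{0,\ldots,n-1\}$). *)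

theory Defs
  imports Complex_Main
begin

text \<open>The index k is an integer,
  so the function is automatically 0 outside {0..card I}.\<close>
definition pb_pmf :: "nat set \<Rightarrow> (nat \<Rightarrow> real) \<Rightarrow> int \<Rightarrow> real" where
  "pb_pmf I q k = (\<Sum>S\<in>{S. S \<subseteq> I \<and> int (card S) = k}.
      (\<Prod>i\<in>S. q i) * (\<Prod>i\<in>I - S. 1 - q i))"

text \<open>Shepp--Olkin: variables indexed by 0..n-1 (paper: 1..n).\<close>
definition SO_f :: "nat \<Rightarrow> (nat \<Rightarrow> real \<Rightarrow> real) \<Rightarrow> real \<Rightarrow> int \<Rightarrow> real" where
  "SO_f n p t k = pb_pmf {..<n} (\<lambda>i. p i t) k"

definition SO_fi :: "nat \<Rightarrow> (nat \<Rightarrow> real \<Rightarrow> real) \<Rightarrow> nat \<Rightarrow> real \<Rightarrow> int \<Rightarrow> real" where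
  "SO_fi n p i t k = pb_pmf ({..<n} - {i}) (\<lambda>j. p j t) k"

definition SO_alpha :: "nat \<Rightarrow> (nat \<Rightarrow> real \<Rightarrow> real) \<Rightarrow> (nat \<Rightarrow> real) \<Rightarrow> real \<Rightarrow> int \<Rightarrow> real" where
  "SO_alpha n p p' t k =
     (\<Sum>i<n. p' i * p i t * SO_fi n p i t (k - 1)) / ((\<Sum>i<n. p' i) * SO_f n p t k)"

end

theory Submission
  imports Defs
begin

lemma pb_rec:
  assumes fin: "finite I" and xI: "x \<notin> I"
  shows "pb_pmf (insert x I) q k = q x * pb_pmf I q (k-1) + (1 - q x) * pb_pmf I q k"
proof -
  let ?A = "{S. S \<subseteq> I \<and> int (card S) = k}"
  let ?B = "{S. S \<subseteq> I \<and> int (card S) = k - 1}"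
  have eq: "{S. S \<subseteq> insert x I \<and> int (card S) = k} = ?A \<union> insert x ` ?B"
  proof (rule set_eqI, rule iffI)
    fix S assume "S \<in> {S. S \<subseteq> insert x I \<and> int (card S) = k}"
    then have S: "S \<subseteq> insert x I" "int (card S) = k" by auto
    have finS: "finite S" using S(1) fin finite_subset by blast
    show "S \<in> ?A \<union> insert x ` ?B"
    proof (cases "x \<in> S")
      case True
      then have "S = insert x (S - {x})" by auto
      moreover have "S - {x} \<subseteq> I" using S by auto
      moreover have "int (card (S - {x})) = k - 1"
        using S True finS card_gt_0_iff[of S] by (auto simp: card_Diff_singleton of_nat_diff)
      ultimately show ?thesis by blast
    next
      case False thus ?thesis using S by auto
    qed
  next
    fix S assume "S \<in> ?A \<union> insert x ` ?B"
    then show "S \<in> {S. S \<subseteq> insert x I \<and> int (card S) = k}"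
    proof
      assume "S \<in> ?A" thus ?thesis by auto
    next
      assume "S \<in> insert x ` ?B"
      then obtain T where T: "T \<subseteq> I" "int (card T) = k - 1" "S = insert x T" by auto
      have "finite T" using T(1) fin finite_subset by blast
      moreover have "x \<notin> T" using T(1) xI by auto
      ultimately show ?thesis using T by auto
    qed
  qed
  have disj: "?A \<inter> insert x ` ?B = {}" using xI by auto
  have finA: "finite ?A" by (rule finite_subset[of _ "Pow I"]) (auto simp: fin)
  have finB: "finite ?B" by (rule finite_subset[of _ "Pow I"]) (auto simp: fin)
  have inj: "inj_on (insert x) ?B"
  proof (rule inj_onI)
    fix T1 T2 assume "T1 \<in> ?B" "T2 \<in> ?B" "insert x T1 = insert x T2"
    then show "T1 = T2" using xI by (metis (no_types, lifting) Diff_insert_absorb mem_Collect_eq subsetD)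
  qed
  have sA: "(\<Sum>S\<in>?A. (\<Prod>i\<in>S. q i) * (\<Prod>i\<in>insert x I - S. 1 - q i))
      = (1 - q x) * pb_pmf I q k"
    unfolding pb_pmf_def sum_distrib_left
  proof (rule sum.cong[OF refl])
    fix S assume "S \<in> ?A"
    then have "insert x I - S = insert x (I - S)" "x \<notin> I - S" using xI by auto
    moreover have "finite (I - S)" using fin by auto
    ultimately show "(\<Prod>i\<in>S. q i) * (\<Prod>i\<in>insert x I - S. 1 - q i) =
        (1 - q x) * ((\<Prod>i\<in>S. q i) * (\<Prod>i\<in>I - S. 1 - q i))" by simp
  qed
  have sB: "(\<Sum>S\<in>insert x ` ?B. (\<Prod>i\<in>S. q i) * (\<Prod>i\<in>insert x I - S. 1 - q i))
      = q x * pb_pmf I q (k - 1)"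
    unfolding pb_pmf_def sum_distrib_left sum.reindex[OF inj] o_def
  proof (rule sum.cong[OF refl])
    fix T assume T: "T \<in> ?B"
    then have "insert x I - insert x T = I - T" "x \<notin> T" using xI by auto
    moreover have "finite T" using T fin finite_subset by auto
    ultimately show "(\<Prod>i\<in>insert x T. q i) * (\<Prod>i\<in>insert x I - insert x T. 1 - q i) =
        q x * ((\<Prod>i\<in>T. q i) * (\<Prod>i\<in>I - T. 1 - q i))" by simp
  qed
  have "pb_pmf (insert x I) q k =
     (\<Sum>S\<in>?A \<union> insert x ` ?B. (\<Prod>i\<in>S. q i) * (\<Prod>i\<in>insert x I - S. 1 - q i))"
    unfolding pb_pmf_def eq ..
  also have "\<dots> = (1 - q x) * pb_pmf I q k + q x * pb_pmf I q (k - 1)"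
    by (simp only: sum.union_disjoint[OF finA finite_imageI[OF finB] disj] sA sB)
  finally show ?thesis by simp
qed

lemma pb_nonneg:
  assumes "\<forall>i\<in>I. 0 \<le> q i \<and> q i \<le> 1"
  shows "0 \<le> pb_pmf I q k"
  unfolding pb_pmf_def using assms
  by (intro sum_nonneg mult_nonneg_nonneg prod_nonneg) auto

lemma pb_empty: "pb_pmf {} q k = (if k = 0 then 1 else 0)"
proof -
  have "{S. S \<subseteq> {} \<and> int (card S) = k} = (if k = 0 then {{}} else {})" (is "?A = _") by auto
  show ?thesis unfolding pb_pmf_def \<open>?A = _\<close> by simp
qed

lemma pb_pf2:
  assumes "finite I" "\<forall>i\<in>I. 0 \<le> q i \<and> q i \<le> 1"
  shows "\<forall>i j. i \<le> j \<longrightarrow> pb_pmf I q (i-1) * pb_pmf I q (j+1) \<le> pb_pmf I q i * pb_pmf I q j"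
  using assms
proof (induction I rule: finite_induct)
  case empty
  show ?case by (simp add: pb_empty)
next
  case (insert x F)
  define a where "a = pb_pmf F q"
  define p where "p = q x"
  have p: "0 \<le> p" "p \<le> 1" using insert.prems p_def by auto
  have IH: "\<And>i j. i \<le> j \<Longrightarrow> a (i-1) * a (j+1) \<le> a i * a j"
    using insert.IH insert.prems unfolding a_def by auto
  have h: "\<And>m. pb_pmf (insert x F) q m = p * a (m-1) + (1-p) * a m"
    using pb_rec[OF insert.hyps] unfolding a_def p_def by simp
  show ?case
  proof (intro allI impI)
    fix i j :: int assume ij: "i \<le> j"
    have X: "a (i-2) * a j \<le> a (i-1) * a (j-1)" using IH[of "i-1" "j-1"] ij
      by (simp add: algebra_simps)
    have Y: "a (i-1) * a (j+1) \<le> a i * a j" using IH[of i j] ij by simp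
    have Z: "a (i-2) * a (j+1) \<le> a i * a (j-1)"
    proof (cases "i < j")
      case True
      have "a (i-1) * a j \<le> a i * a (j-1)" using IH[of i "j-1"] True by simp
      moreover have "a (i-2) * a (j+1) \<le> a (i-1) * a j" using IH[of "i-1" j] ij
        by (simp add: algebra_simps)
      ultimately show ?thesis by linarith
    next
      case False
      then have "j = i" using ij by simp
      thus ?thesis using IH[of "i-1" i] by (simp add: algebra_simps)
    qed
    have e1: "i - 1 - 1 = i - 2" by simp
    have "(p * a (i-1) + (1-p) * a i) * (p * a (j-1) + (1-p) * a j)
       - (p * a (i-2) + (1-p) * a (i-1)) * (p * a j + (1-p) * a (j+1))
       = p*p * (a (i-1) * a (j-1) - a (i-2) * a j) + (1-p)*(1-p) * (a i * a j - a (i-1) * a (j+1))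
         + p*(1-p) * (a i * a (j-1) - a (i-2) * a (j+1))"
      by (simp add: algebra_simps)
    moreover have "0 \<le> p*p * (a (i-1) * a (j-1) - a (i-2) * a j) + (1-p)*(1-p) * (a i * a j - a (i-1) * a (j+1))
         + p*(1-p) * (a i * a (j-1) - a (i-2) * a (j+1))"
      using X Y Z p by (intro add_nonneg_nonneg mult_nonneg_nonneg) auto
    ultimately show "pb_pmf (insert x F) q (i-1) * pb_pmf (insert x F) q (j+1)
        \<le> pb_pmf (insert x F) q i * pb_pmf (insert x F) q j"
      unfolding h e1 by simp
  qed
qed

theorem proposition5p2:
  fixes n :: nat and p :: "nat \<Rightarrow> real \<Rightarrow> real" and p' :: "nat \<Rightarrow> real"
    and t :: real and k :: nat
  assumes affine: "\<forall>i<n. \<forall>s\<in>{0..1}. p i s = p i 0 + p' i * s"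
    and range: "\<forall>i<n. \<forall>s\<in>{0..1}. p i s \<in> {0..1}"
    and deriv_nonneg: "\<forall>i<n. p' i \<ge> 0"
    and v_pos: "(\<Sum>i<n. p' i) > 0"
    and t: "t \<in> {0..1}"
    and k: "k < n"
    and fk_pos: "SO_f n p t (int k) > 0"
    and fk1_pos: "SO_f n p t (int k + 1) > 0"
  shows "SO_alpha n p p' t (int k) \<le> SO_alpha n p p' t (int k + 1)"
proof -
  define v where "v = (\<Sum>i<n. p' i)"
  define F0 where "F0 = SO_f n p t (int k)"
  define F1 where "F1 = SO_f n p t (int k + 1)"
  define N0 where "N0 = (\<Sum>i<n. p' i * p i t * SO_fi n p i t (int k - 1))"
  define N1 where "N1 = (\<Sum>i<n. p' i * p i t * SO_fi n p i t (int k))"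
  have tm: "p' i * p i t * SO_fi n p i t (int k - 1) * F1 \<le> p' i * p i t * SO_fi n p i t (int k) * F0"
    if i: "i < n" for i
  proof -
    define g where "g = SO_fi n p i t"
    define r where "r = p i t"
    have r: "0 \<le> r" "r \<le> 1" using range i t r_def by auto
    have qr: "\<forall>j\<in>{..<n} - {i}. 0 \<le> p j t \<and> p j t \<le> 1" using range t by auto
    have ins: "{..<n} = insert i ({..<n} - {i})" using i by auto
    have f: "\<And>m. SO_f n p t m = r * g (m-1) + (1-r) * g m"
      unfolding SO_f_def g_def SO_fi_def r_def
      by (subst ins, subst pb_rec) auto
    have lc: "g (int k - 1) * g (int k + 1) \<le> g (int k) * g (int k)"
      using pb_pf2[OF _ qr] unfolding g_def SO_fi_def by auto
    have "g (int k - 1) * F1 \<le> g (int k) * F0"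
    proof -
      have "g (int k) * F0 - g (int k - 1) * F1 = (1-r) * (g (int k) * g (int k) - g (int k - 1) * g (int k + 1))"
        unfolding F0_def F1_def f by (simp add: algebra_simps)
      moreover have "0 \<le> (1-r) * (g (int k) * g (int k) - g (int k - 1) * g (int k + 1))"
        using r lc by auto
      ultimately show ?thesis by linarith
    qed
    moreover have "0 \<le> p' i * r" using r deriv_nonneg i by auto
    ultimately have "(p' i * r) * (g (int k - 1) * F1) \<le> (p' i * r) * (g (int k) * F0)"
      by (rule mult_left_mono)
    thus ?thesis unfolding g_def r_def by (simp add: algebra_simps)
  qed
  have "N0 * F1 \<le> N1 * F0"
    unfolding N0_def N1_def sum_distrib_right by (rule sum_mono) (use tm in auto)
  moreover have "v > 0" "F0 > 0" "F1 > 0" using v_pos fk_pos fk1_pos v_def F0_def F1_def by auto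
  ultimately have "N0 / (v * F0) \<le> N1 / (v * F1)"
    by (simp add: divide_simps algebra_simps)
  thus ?thesis unfolding SO_alpha_def N0_def N1_def v_def F0_def F1_def by simp
qed

end
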